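(* Fix $b\in\mathbb{Z}^{V_+}_{\ge0}$. For every $\bar x\in\mathcal{X}$ let $\mathrm{FLOW}(\bar x)$ be the set of $y\in[\mathbf 0,b]^N$ for which there exist $f\in\mathbb{R}^{[N]\times A}_{\ge0}$ and $g\in\mathbb{R}^{[N]\times V_+}_{\ge0}$ with $f^\xi(\delta^-(v))+d^\xi(v)=f^\xi(\delta^+(v))+g^\xi_v$ for all $v\in V_+$, $\xi\in[N]$; $f^\xi_{(u,v)}\le\frac{C}{2}\bar x_{\{u,v\}}$ for all $(u,v)\in A$, $\xi\in[N]$; and $g^\xi_v\le C\,y^\xi_v$ for all $v\in V_+$, $\xi\in[N]$. Then $\mathrm{FLOW}(\bar x)\cap\mathbb{Z}^{[N]\times V_+}=\Pi(\bar x)\cap[\mathbf 0,b]^N$ for every $\bar x\in\mathcal{X}\cap\mathbb{Z}^E$.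
   Context: $G=(V,E)$ complete undirected graph with $V=\{0\}\cup V_+$ ($0$ depot, $V_+$ customers); $D=(V,A)$ replaces each edge by two opposite arcs; $\delta^-(v)$ and $\delta^+(v)$ are the arcs entering and leaving $v$ in $D$. Capacity $C>0$; scenarios $\xi\in[N]$ with demands $d^\xi\in\mathbb{Q}^{V_+}_{\ge0}$, $d^\xi(v)\le C$ for all $\xi,v$, and probabilities $p_\xi\ge0$ summing to $1$; $\bar d=\sum_\xi p_\xi d^\xi$. $f(S)=\sum_{i\in S}f(i)$; $\delta(S)$: edges with exactly one end in $S$; $E(S)$: edges with both ends in $S$. $\mathcal{X}$ is one of $\mathcal{X}_{\mathrm{sub}}=\{x\in[0,2]^E: x(\delta(v))=2\ \forall v\in V_+,\ x(E(S))\le|S|-1\ \forall\emptyset\ne S\subseteq V_+\}$ or $\mathcal{X}_{\mathrm{cvrp}}=\mathcal{X}_{\mathrm{sub}}\cap\{x:x(\delta(0))=2k,\ x(E(S))\le|S|-\lceil\bar d(S)/C\rceil\}$ for a given positive integer $k$. A route $R=(v_1,\dots,v_\ell)$ is the cycle $0,v_1,\dots,v_\ell,0$ through distinct customers, $v_0=v_{\ell+1}=0$. Each $x\in\mathcal{X}\cap\mathbb{Z}^E$ encodes a collection of routes $\mathcal{R}(x)$ whose customer sets partition $V_+$. For a route $R$ and $\xi$, $\mathcal{Y}^\xi(R)$ is the set of $y^\xi\in\mathbb{Z}^{V_+}_{\ge0}$ for which there exist $f\in\mathbb{R}^A_{\ge0}$, $g\in\mathbb{R}^{V_+}_{\ge0}$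 with $f_{(v_{i-1},v_i)}+d^\xi(v_i)=f_{(v_i,v_{i+1})}+g_{v_i}$ ($i\in[\ell]$), $f_{(v_{i-1},v_i)}\le C$ ($i\in[\ell+1]$), $g_{v_i}\le Cy^\xi_{v_i}$ ($i\in[\ell]$). $\Pi(R)=\mathcal{Y}^1(R)\times\cdots\times\mathcal{Y}^N(R)$, $\Pi(x)=\bigcap_{R\in\mathcal{R}(x)}\Pi(R)$. $[\mathbf 0,b]^N=\{y\in\mathbb{R}^{[N]\times V_+}:0\le y^\xi_v\le b_v\}$. *)

theory Defs
  imports Complex_Main
begin

(* Graph: vertex set V = insert dep Vp (dep = depot 0, Vp = customers V_+).
   Undirected edges are two-element vertex sets {u,v}; arcs are ordered pairs. *)

definition verts :: "'v \<Rightarrow> 'v set \<Rightarrow> 'v set" where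
  "verts dep Vp = insert dep Vp"

definition edges :: "'v \<Rightarrow> 'v set \<Rightarrow> 'v set set" where
  "edges dep Vp = {{u, v} | u v. u \<in> verts dep Vp \<and> v \<in> verts dep Vp \<and> u \<noteq> v}"

definition arcs :: "'v \<Rightarrow> 'v set \<Rightarrow> ('v \<times> 'v) set" where
  "arcs dep Vp = {(u, v). u \<in> verts dep Vp \<and> v \<in> verts dep Vp \<and> u \<noteq> v}"

definition cut :: "'v \<Rightarrow> 'v set \<Rightarrow> 'v set \<Rightarrow> 'v set set" where
  "cut dep Vp S = {e \<in> edges dep Vp. card (e \<inter> S) = 1}"

definition inner_edges :: "'v \<Rightarrow> 'v set \<Rightarrow> 'v set \<Rightarrow> 'v set set" where
  "inner_edges dep Vp S = {e \<in> edges dep Vp. e \<subseteq> S}"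

definition dbar :: "nat \<Rightarrow> (nat \<Rightarrow> real) \<Rightarrow> (nat \<Rightarrow> 'v \<Rightarrow> real) \<Rightarrow> 'v \<Rightarrow> real" where
  "dbar N p d v = (\<Sum>\<xi>\<in>{1..N}. p \<xi> * d \<xi> v)"

definition Xsub :: "'v \<Rightarrow> 'v set \<Rightarrow> ('v set \<Rightarrow> real) set" where
  "Xsub dep Vp = {x.
     (\<forall>e\<in>edges dep Vp. 0 \<le> x e \<and> x e \<le> 2) \<and>
     (\<forall>v\<in>Vp. sum x (cut dep Vp {v}) = 2) \<and>
     (\<forall>S. S \<noteq> {} \<and> S \<subseteq> Vp \<longrightarrow> sum x (inner_edges dep Vp S) \<le> real (card S) - 1)}"

definition Xcvrp :: "'v \<Rightarrow> 'v set \<Rightarrow> real \<Rightarrow> nat \<Rightarrow> (nat \<Rightarrow> real) \<Rightarrow> (nat \<Rightarrow> 'v \<Rightarrow> real)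
                      \<Rightarrow> nat \<Rightarrow> ('v set \<Rightarrow> real) set" where
  "Xcvrp dep Vp C N p d k = Xsub dep Vp \<inter> {x.
     sum x (cut dep Vp {dep}) = 2 * real k \<and>
     (\<forall>S. S \<noteq> {} \<and> S \<subseteq> Vp \<longrightarrow>
        sum x (inner_edges dep Vp S) \<le> real (card S) - of_int \<lceil>sum (dbar N p d) S / C\<rceil>)}"

(* A route R = [v_1,...,v_l] is the cycle dep, v_1, ..., v_l, dep.
   Its list of traversed (undirected) edges: *)
definition route_edges :: "'v \<Rightarrow> 'v list \<Rightarrow> 'v set list" where
  "route_edges dep R = map (\<lambda>(u, v). {u, v}) (zip (dep # R) (R @ [dep]))"

(* R belongs to the route collection R(x) encoded by integral x: for every edge
   touching a customer of R, x_e equals the number of times the cycle uses e.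
   (Both orientations of a cycle are admitted.) *)
definition in_routes :: "'v \<Rightarrow> 'v set \<Rightarrow> ('v set \<Rightarrow> real) \<Rightarrow> 'v list \<Rightarrow> bool" where
  "in_routes dep Vp x R \<longleftrightarrow> R \<noteq> [] \<and> distinct R \<and> set R \<subseteq> Vp \<and>
     (\<forall>e\<in>edges dep Vp. e \<inter> set R \<noteq> {} \<longrightarrow> x e = real (count_list (route_edges dep R) e))"

definition Yset :: "'v \<Rightarrow> 'v set \<Rightarrow> real \<Rightarrow> (nat \<Rightarrow> 'v \<Rightarrow> real) \<Rightarrow> nat \<Rightarrow> 'v list
                     \<Rightarrow> ('v \<Rightarrow> real) set" where
  "Yset dep Vp C d \<xi> R = {y.
     (\<forall>v\<in>Vp. y v \<in> \<int> \<and> 0 \<le> y v) \<and>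
     (let vs = dep # R @ [dep]; l = length R in
      \<exists>(f :: 'v \<times> 'v \<Rightarrow> real) (g :: 'v \<Rightarrow> real).
        (\<forall>a\<in>arcs dep Vp. 0 \<le> f a) \<and> (\<forall>v\<in>Vp. 0 \<le> g v) \<and>
        (\<forall>i\<in>{1..l}. f (vs ! (i - 1), vs ! i) + d \<xi> (vs ! i) = f (vs ! i, vs ! (i + 1)) + g (vs ! i)) \<and>
        (\<forall>i\<in>{1..l + 1}. f (vs ! (i - 1), vs ! i) \<le> C) \<and>
        (\<forall>i\<in>{1..l}. g (vs ! i) \<le> C * y (vs ! i)))}"

definition PiX :: "'v \<Rightarrow> 'v set \<Rightarrow> real \<Rightarrow> nat \<Rightarrow> (nat \<Rightarrow> 'v \<Rightarrow> real) \<Rightarrow> ('v set \<Rightarrow> real)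
                    \<Rightarrow> (nat \<Rightarrow> 'v \<Rightarrow> real) set" where
  "PiX dep Vp C N d x = {y. \<forall>R. in_routes dep Vp x R \<longrightarrow> (\<forall>\<xi>\<in>{1..N}. y \<xi> \<in> Yset dep Vp C d \<xi> R)}"

definition box :: "'v set \<Rightarrow> nat \<Rightarrow> ('v \<Rightarrow> int) \<Rightarrow> (nat \<Rightarrow> 'v \<Rightarrow> real) set" where
  "box Vp N b = {y. \<forall>\<xi>\<in>{1..N}. \<forall>v\<in>Vp. 0 \<le> y \<xi> v \<and> y \<xi> v \<le> of_int (b v)}"

definition intpts :: "'v set \<Rightarrow> nat \<Rightarrow> (nat \<Rightarrow> 'v \<Rightarrow> real) set" where
  "intpts Vp N = {y. \<forall>\<xi>\<in>{1..N}. \<forall>v\<in>Vp. y \<xi> v \<in> \<int>}"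

definition FLOW :: "'v \<Rightarrow> 'v set \<Rightarrow> real \<Rightarrow> nat \<Rightarrow> (nat \<Rightarrow> 'v \<Rightarrow> real) \<Rightarrow> ('v \<Rightarrow> int)
                    \<Rightarrow> ('v set \<Rightarrow> real) \<Rightarrow> (nat \<Rightarrow> 'v \<Rightarrow> real) set" where
  "FLOW dep Vp C N d b x = {y. y \<in> box Vp N b \<and>
     (\<exists>(f :: nat \<Rightarrow> 'v \<times> 'v \<Rightarrow> real) (g :: nat \<Rightarrow> 'v \<Rightarrow> real).
        (\<forall>\<xi>\<in>{1..N}. \<forall>a\<in>arcs dep Vp. 0 \<le> f \<xi> a) \<and>
        (\<forall>\<xi>\<in>{1..N}. \<forall>v\<in>Vp. 0 \<le> g \<xi> v) \<and>
        (\<forall>\<xi>\<in>{1..N}. \<forall>v\<in>Vp.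
           (\<Sum>a\<in>{a\<in>arcs dep Vp. snd a = v}. f \<xi> a) + d \<xi> v =
           (\<Sum>a\<in>{a\<in>arcs dep Vp. fst a = v}. f \<xi> a) + g \<xi> v) \<and>
        (\<forall>\<xi>\<in>{1..N}. \<forall>(u, v)\<in>arcs dep Vp. f \<xi> (u, v) \<le> C / 2 * x {u, v}) \<and>
        (\<forall>\<xi>\<in>{1..N}. \<forall>v\<in>Vp. g \<xi> v \<le> C * y \<xi> v))}"

end

theory Submission
  imports Defs
begin

locale rt =
  fixes dep :: 'v and Vp :: "'v set" and x :: "'v set \<Rightarrow> real"
  assumes finV: "finite Vp" and depn: "dep \<notin> Vp" and xsub: "x \<in> Xsub dep Vp"
    and xint: "\<forall>e\<in>edges dep Vp. x e \<in> \<int>"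
begin

abbreviation "V \<equiv> insert dep Vp"

lemma edge_mem: "{u,v} \<in> edges dep Vp \<longleftrightarrow> u \<in> V \<and> v \<in> V \<and> u \<noteq> v"
  unfolding edges_def verts_def by (auto simp: doubleton_eq_iff)

lemma finE: "finite (edges dep Vp)"
proof -
  have "edges dep Vp \<subseteq> (\<lambda>(u,v). {u,v}) ` (V \<times> V)"
    unfolding edges_def verts_def by auto
  thus ?thesis using finV by (meson finite_SigmaI finite_imageI finite_insert finite_subset)
qed

lemma xb: assumes "u \<in> V" "v \<in> V" "u \<noteq> v"
  shows "x {u,v} \<in> \<int>" "0 \<le> x {u,v}" "x {u,v} \<le> 2"
  using assms xint xsub edge_mem[of u v] unfolding Xsub_def by auto

lemma x012: assumes "u \<in> V" "v \<in> V" "u \<noteq> v"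
  shows "x {u,v} = 0 \<or> x {u,v} = 1 \<or> x {u,v} = 2"
proof -
  obtain n where n: "x {u,v} = of_int n" using xb(1)[OF assms] by (auto elim: Ints_cases)
  have "0 \<le> n" "n \<le> 2" using xb(2,3)[OF assms] n by auto
  hence "n = 0 \<or> n = 1 \<or> n = 2" by auto
  thus ?thesis using n by auto
qed

lemma subtour: assumes "S \<noteq> {}" "S \<subseteq> Vp"
  shows "sum x (inner_edges dep Vp S) \<le> real (card S) - 1"
proof -
  have "\<forall>S. S \<noteq> {} \<and> S \<subseteq> Vp \<longrightarrow> sum x (inner_edges dep Vp S) \<le> real (card S) - 1"
    using xsub unfolding Xsub_def by simp
  thus ?thesis using assms by simp
qed

lemma cut_single: assumes "c \<in> Vp" shows "cut dep Vp {c} = (\<lambda>u. {c,u}) ` (V - {c})"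
proof (rule set_eqI, rule iffI)
  fix e assume "e \<in> cut dep Vp {c}"
  then have e: "e \<in> edges dep Vp" "card (e \<inter> {c}) = 1" unfolding cut_def by auto
  have ce: "c \<in> e"
  proof (rule ccontr)
    assume "c \<notin> e" hence "e \<inter> {c} = {}" by blast
    thus False using e(2) by simp
  qed
  obtain u v where uv: "e = {u,v}" "u \<in> V" "v \<in> V" "u \<noteq> v"
    using e(1) unfolding edges_def verts_def by blast
  show "e \<in> (\<lambda>u. {c,u}) ` (V - {c})"
  proof (cases "c = u")
    case True thus ?thesis using uv by blast
  next
    case False hence "c = v" using ce uv by blast
    hence "e = {c,u}" using uv by blast
    thus ?thesis using uv \<open>c = v\<close> by blast
  qed
next
  fix e assume "e \<in> (\<lambda>u. {c,u}) ` (V - {c})"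
  then obtain u where u: "u \<in> V - {c}" "e = {c,u}" by blast
  hence "e \<in> edges dep Vp" using assms edge_mem[of c u] by blast
  moreover have "e \<inter> {c} = {c}" using u by blast
  ultimately show "e \<in> cut dep Vp {c}" unfolding cut_def by simp
qed

lemma deg: assumes "c \<in> Vp" shows "(\<Sum>u\<in>V - {c}. x {c,u}) = 2"
proof -
  have "inj_on (\<lambda>u. {c,u}) (V - {c})"
    by (rule inj_onI) (auto simp: doubleton_eq_iff)
  hence "sum x (cut dep Vp {c}) = (\<Sum>u\<in>V - {c}. x {c,u})"
    using cut_single[OF assms] by (simp add: sum.reindex)
  moreover have "sum x (cut dep Vp {c}) = 2" using xsub assms unfolding Xsub_def by simp
  ultimately show ?thesis by simp
qed

lemma claimA: assumes "u \<in> Vp" "v \<in> Vp" "u \<noteq> v" shows "x {u,v} \<le> 1"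
proof -
  have "inner_edges dep Vp {u,v} = {{u,v}}"
  proof (rule set_eqI, rule iffI)
    fix e assume "e \<in> inner_edges dep Vp {u,v}"
    hence e: "e \<in> edges dep Vp" "e \<subseteq> {u,v}" unfolding inner_edges_def by auto
    obtain p q where pq: "e = {p,q}" "p \<noteq> q" using e(1) unfolding edges_def by blast
    thus "e \<in> {{u,v}}" using e(2) by blast
  next
    fix e assume "e \<in> {{u,v}}"
    thus "e \<in> inner_edges dep Vp {u,v}" unfolding inner_edges_def using edge_mem[of u v] assms by auto
  qed
  moreover have "sum x (inner_edges dep Vp {u,v}) \<le> real (card {u,v}) - 1"
    using subtour[of "{u,v}"] assms by simp
  ultimately show ?thesis using assms by simp
qed

lemma finV': "finite V" using finV by simp

lemma loc:
  assumes c: "c \<in> Vp" and a: "a \<in> V" "a \<noteq> c" and b: "b \<in> V" "b \<noteq> c"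
    and xa: "x {c,a} \<ge> 1" and xb': "x {c,b} \<ge> 1" and ab: "a = b \<Longrightarrow> x {c,a} = 2"
    and u: "u \<in> V" "u \<noteq> c"
  shows "x {c,u} = (if u = a then 1 else 0) + (if u = b then 1 else 0)"
proof -
  have nn: "\<And>w. w \<in> V - {c} \<Longrightarrow> 0 \<le> x {c,w}" using c xb(2) by auto
  have fin: "finite (V - {c})" using finV by simp
  show ?thesis
  proof (cases "a = b")
    case True
    have "(\<Sum>w\<in>V - {c}. x {c,w}) = x {c,a} + (\<Sum>w\<in>V - {c} - {a}. x {c,w})"
      using a fin by (simp add: sum.remove)
    hence s0: "(\<Sum>w\<in>V - {c} - {a}. x {c,w}) = 0" using deg[OF c] ab True by simp
    have "\<forall>w\<in>V - {c} - {a}. x {c,w} = 0"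
      using sum_nonneg_eq_0_iff[of "V - {c} - {a}" "\<lambda>w. x {c,w}"] s0 fin nn by auto
    thus ?thesis using True ab u by auto
  next
    case False
    have "(\<Sum>w\<in>V - {c}. x {c,w}) = x {c,a} + (\<Sum>w\<in>V - {c} - {a}. x {c,w})"
      using a fin by (simp add: sum.remove)
    also have "(\<Sum>w\<in>V - {c} - {a}. x {c,w}) = x {c,b} + (\<Sum>w\<in>V - {c} - {a} - {b}. x {c,w})"
      using b fin False sum.remove[of "V - {c} - {a}" b "\<lambda>w. x {c,w}"] by auto
    finally have s: "2 = x {c,a} + x {c,b} + (\<Sum>w\<in>V - {c} - {a} - {b}. x {c,w})"
      using deg[OF c] by simp
    have "(\<Sum>w\<in>V - {c} - {a} - {b}. x {c,w}) \<ge> 0" using nn by (intro sum_nonneg) auto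
    hence e: "x {c,a} = 1" "x {c,b} = 1" "(\<Sum>w\<in>V - {c} - {a} - {b}. x {c,w}) = 0"
      using s xa xb' by linarith+
    have "\<forall>w\<in>V - {c} - {a} - {b}. x {c,w} = 0"
      using sum_nonneg_eq_0_iff[of "V - {c} - {a} - {b}" "\<lambda>w. x {c,w}"] e(3) fin nn by auto
    thus ?thesis using False e u by auto
  qed
qed

lemma cyc:
  assumes M: "distinct M" "set M \<subseteq> Vp" "length M \<ge> 3"
    and cons: "\<forall>i. Suc i < length M \<longrightarrow> x {M!i, M!Suc i} \<ge> 1"
    and cl: "x {M!0, M!(length M - 1)} \<ge> 1"
  shows False
proof -
  let ?m = "length M"
  let ?E1 = "(\<lambda>i. {M!i, M!Suc i}) ` {..<?m - 1}"
  let ?cl = "{M!0, M!(?m - 1)}"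
  have neq: "\<And>i j. i < ?m \<Longrightarrow> j < ?m \<Longrightarrow> M!i = M!j \<Longrightarrow> i = j"
    using M(1) nth_eq_iff_index_eq by blast
  have inj: "inj_on (\<lambda>i. {M!i, M!Suc i}) {..<?m - 1}"
  proof (rule inj_onI)
    fix i j assume ij: "i \<in> {..<?m - 1}" "j \<in> {..<?m - 1}" "{M!i, M!Suc i} = {M!j, M!Suc j}"
    hence "(M!i = M!j \<and> M!Suc i = M!Suc j) \<or> (M!i = M!Suc j \<and> M!Suc i = M!j)"
      by (simp add: doubleton_eq_iff)
    moreover have ij2: "i < ?m" "j < ?m" "Suc i < ?m" "Suc j < ?m" using ij by auto
    ultimately show "i = j"
    proof (elim disjE conjE)
      assume "M!i = M!j" thus "i = j" using neq ij2 by simp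
    next
      assume "M!i = M!Suc j" "M!Suc i = M!j"
      hence "i = Suc j" "Suc i = j" using neq ij2 by simp_all
      thus "i = j" by simp
    qed
  qed
  have clnot: "?cl \<notin> ?E1"
  proof
    assume "?cl \<in> ?E1"
    then obtain i where i: "i < ?m - 1" "?cl = {M!i, M!Suc i}" by blast
    hence o: "(M!0 = M!i \<and> M!(?m-1) = M!Suc i) \<or> (M!0 = M!Suc i \<and> M!(?m - 1) = M!i)"
      by (simp add: doubleton_eq_iff)
    have "i < ?m" "Suc i < ?m" "0 < ?m" "?m - 1 < ?m" using i M(3) by auto
    show False
    proof (cases "M!0 = M!i \<and> M!(?m-1) = M!Suc i")
      case True
      hence "0 = i" "?m - 1 = Suc i" using neq[of 0 i] neq[of "?m - 1" "Suc i"] \<open>i < ?m\<close> \<open>Suc i < ?m\<close> \<open>0 < ?m\<close> \<open>?m - 1 < ?m\<close> by simp_all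
      thus False using M(3) by linarith
    next
      case False
      hence "M!0 = M!Suc i" using o by blast
      hence "0 = Suc i" using neq[of 0 "Suc i"] \<open>Suc i < ?m\<close> \<open>0 < ?m\<close> by simp
      thus False by simp
    qed
  qed
  have mem: "\<And>i. i < ?m \<Longrightarrow> M!i \<in> Vp" using M(2) nth_mem by blast
  have sub: "insert ?cl ?E1 \<subseteq> inner_edges dep Vp (set M)"
  proof -
    have "0 < ?m" "?m - 1 < ?m" "0 \<noteq> ?m - 1" using M(3) by auto
    hence "M!0 \<noteq> M!(?m - 1)" using neq[of 0 "?m - 1"] by blast
    moreover have "M!0 \<in> set M" "M!(?m - 1) \<in> set M" using \<open>0 < ?m\<close> \<open>?m - 1 < ?m\<close> nth_mem by blast+
    ultimately have "?cl \<in> inner_edges dep Vp (set M)"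
      unfolding inner_edges_def using edge_mem[of "M!0" "M!(?m - 1)"] M(2) by auto
    moreover have "?E1 \<subseteq> inner_edges dep Vp (set M)"
    proof
      fix e assume "e \<in> ?E1"
      then obtain i where i: "i < ?m - 1" "e = {M!i, M!Suc i}" by blast
      have i2: "i < ?m" "Suc i < ?m" using i by auto
      have "M!i \<noteq> M!Suc i" using neq[OF i2] by auto
      moreover have "M!i \<in> set M" "M!Suc i \<in> set M" using i2 nth_mem by blast+
      moreover have "M!i \<in> Vp" "M!Suc i \<in> Vp" using mem i2 by blast+
      ultimately have "e \<in> edges dep Vp" "e \<subseteq> set M" using i edge_mem[of "M!i" "M!Suc i"] by auto
      thus "e \<in> inner_edges dep Vp (set M)"
        unfolding inner_edges_def by blast
    qed
    ultimately show ?thesis by blast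
  qed
  have fin: "finite (inner_edges dep Vp (set M))" using finE unfolding inner_edges_def by auto
  have nn: "\<forall>e\<in>inner_edges dep Vp (set M). 0 \<le> x e" using xsub unfolding Xsub_def inner_edges_def by auto
  have a1: "sum x (insert ?cl ?E1) \<le> sum x (inner_edges dep Vp (set M))"
    using sub fin nn by (intro sum_mono2) auto
  have a2: "sum x (insert ?cl ?E1) = x ?cl + sum x ?E1" using clnot by simp
  have a3: "sum x ?E1 = (\<Sum>i<?m - 1. x {M!i, M!Suc i})" using inj by (simp add: sum.reindex)
  have a4: "(\<Sum>i<?m - 1. x {M!i, M!Suc i}) \<ge> (\<Sum>i<?m - 1. 1)"
    using cons by (intro sum_mono) auto
  have a5: "(\<Sum>i<?m - 1. (1::real)) = real ?m - 1" using M(3) by simp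
  have a6: "sum x (inner_edges dep Vp (set M)) \<le> real (card (set M)) - 1"
  proof -
    have "set M \<noteq> {}" using M(3) by auto
    thus ?thesis using subtour M(2) by simp
  qed
  have a7: "card (set M) = ?m" using M(1) distinct_card by blast
  show False using a1 a2 a3 a4 a5 a6 a7 cl by linarith
qed

end

definition wl :: "'v \<Rightarrow> 'v list \<Rightarrow> 'v list" where "wl dep R = dep # R @ [dep]"

lemma wnth: assumes "i \<le> Suc (length R)"
  shows "wl dep R ! i = (if i = 0 \<or> i = Suc (length R) then dep else R ! (i - 1))"
proof (cases i)
  case 0 thus ?thesis by (simp add: wl_def)
next
  case (Suc j)
  thus ?thesis using assms by (auto simp: nth_append wl_def)
qed

locale wloc =
  fixes dep :: 'v and R :: "'v list"
  assumes dR: "distinct R" and depR: "dep \<notin> set R" and Rne: "R \<noteq> []"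
begin

abbreviation "w \<equiv> wl dep R"
abbreviation "l \<equiv> length R"

lemma l1: "1 \<le> l" using Rne by (cases R) auto

lemma wcust: assumes "1 \<le> k" "k \<le> l" shows "w ! k = R ! (k - 1)" "w ! k \<in> set R" "w ! k \<noteq> dep"
proof -
  show "w ! k = R ! (k - 1)" using assms wnth[of k R dep] by simp
  moreover have "R ! (k - 1) \<in> set R" using assms by simp
  ultimately show "w ! k \<in> set R" "w ! k \<noteq> dep" using depR by auto
qed

lemma w0: "w ! 0 = dep" and wl: "w ! Suc l = dep"
  by (auto simp: nth_append wl_def)

lemma wset: assumes "i \<le> Suc l" shows "w ! i \<in> insert dep (set R)"
  using assms wnth[of i R dep] by auto

lemma pos: assumes "1 \<le> k" "k \<le> l" "i \<le> Suc l" "w ! i = w ! k" shows "i = k"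
proof -
  have nd: "w ! i \<noteq> dep" using assms wcust by auto
  have "i \<noteq> 0" proof assume "i = 0" thus False using nd w0 by simp qed
  moreover have "i \<noteq> Suc l" proof assume "i = Suc l" thus False using nd wl by simp qed
  ultimately have "w ! i = R ! (i - 1)" "i - 1 < l" "k - 1 < l" using assms wnth[of i R dep] by auto
  hence "R ! (i - 1) = R ! (k - 1)" "i - 1 < l" "k - 1 < l" using assms wcust(1) by auto
  hence "i - 1 = k - 1" using dR nth_eq_iff_index_eq by blast
  thus ?thesis using assms \<open>i \<noteq> 0\<close> by linarith
qed

lemma wne: assumes "i \<le> l" shows "w ! i \<noteq> w ! Suc i"
proof (cases "i = 0")
  case True
  thus ?thesis using wcust(3)[of 1] l1 w0 by auto
next
  case False
  hence "1 \<le> i" by simp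
  show ?thesis
  proof
    assume "w ! i = w ! Suc i"
    hence "Suc i = i" using pos[of i "Suc i"] assms \<open>1 \<le> i\<close> by simp
    thus False by simp
  qed
qed

lemma ab1: assumes "1 \<le> k" "k \<le> l" "w ! (k - 1) = w ! Suc k" shows "l = 1"
proof (cases "w ! (k - 1) = dep")
  case True
  have "k - 1 = 0"
  proof (rule ccontr)
    assume "k - 1 \<noteq> 0"
    hence "1 \<le> k - 1" "k - 1 \<le> l" using assms by auto
    thus False using wcust(3) True by blast
  qed
  moreover have "Suc k = Suc l"
  proof (rule ccontr)
    assume "Suc k \<noteq> Suc l"
    hence "1 \<le> Suc k" "Suc k \<le> l" using assms by auto
    hence "w ! Suc k \<noteq> dep" using wcust(3) by blast
    thus False using True assms(3) by simp
  qed
  ultimately show ?thesis using assms(1) by linarith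
next
  case False
  hence "k - 1 \<noteq> 0" using w0 by auto
  hence a: "1 \<le> k - 1" "k - 1 \<le> l" using assms by auto
  have sk: "Suc k \<le> Suc l" using assms by simp
  hence "Suc k = k - 1" using pos[OF a sk] assms(3) by simp
  thus ?thesis by simp
qed

lemma re_nth: assumes "i \<le> l" shows "route_edges dep R ! i = {w ! i, w ! Suc i}"
proof -
  have "route_edges dep R ! i = (\<lambda>(u, v). {u, v}) (zip (dep # R) (R @ [dep]) ! i)"
    unfolding route_edges_def using assms by (simp add: less_Suc_eq_le)
  also have "zip (dep # R) (R @ [dep]) ! i = ((dep # R) ! i, (R @ [dep]) ! i)"
    using assms by (simp add: less_Suc_eq_le)
  also have "(dep # R) ! i = w ! i" using assms by (cases i) (auto simp: wl_def nth_append)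
  also have "(R @ [dep]) ! i = w ! Suc i" by (simp add: wl_def)
  finally show ?thesis by simp
qed

lemma re_len: "length (route_edges dep R) = Suc l" unfolding route_edges_def by simp

lemma cnt: assumes k: "1 \<le> k" "k \<le> l" and u: "u \<noteq> w ! k"
  shows "count_list (route_edges dep R) {w ! k, u} =
     (if u = w ! (k - 1) then 1 else 0) + (if u = w ! Suc k then 1 else 0)"
proof -
  let ?c = "w ! k"
  let ?A = "(if u = w ! Suc k then {k} else {})"
  let ?B = "(if u = w ! (k - 1) then {k - 1} else {})"
  have "count_list (route_edges dep R) {?c, u} = card {i. i < Suc l \<and> {?c,u} = route_edges dep R ! i}"
    by (simp add: count_list_eq_length_filter length_filter_conv_card re_len)
  also have "{i. i < Suc l \<and> {?c,u} = route_edges dep R ! i} = ?A \<union> ?B"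
  proof (rule set_eqI)
    fix i
    show "i \<in> {i. i < Suc l \<and> {?c,u} = route_edges dep R ! i} \<longleftrightarrow> i \<in> ?A \<union> ?B"
    proof
      assume "i \<in> {i. i < Suc l \<and> {?c,u} = route_edges dep R ! i}"
      hence i0: "i \<le> l" "{?c,u} = route_edges dep R ! i" by simp_all
      hence i: "i \<le> l" "{?c,u} = {w ! i, w ! Suc i}" using re_nth[of i] by simp_all
      hence "(?c = w ! i \<and> u = w ! Suc i) \<or> (?c = w ! Suc i \<and> u = w ! i)"
        by (simp add: doubleton_eq_iff)
      thus "i \<in> ?A \<union> ?B"
      proof
        assume h: "?c = w ! i \<and> u = w ! Suc i"
        have il: "i \<le> Suc l" using i by simp
        hence "i = k" using pos[OF k il] h by simp
        thus ?thesis using h by simp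
      next
        assume h: "?c = w ! Suc i \<and> u = w ! i"
        have il: "Suc i \<le> Suc l" using i by simp
        hence "Suc i = k" using pos[OF k il] h by simp
        hence "i = k - 1" by simp
        thus ?thesis using h by simp
      qed
    next
      assume h: "i \<in> ?A \<union> ?B"
      show "i \<in> {i. i < Suc l \<and> {?c,u} = route_edges dep R ! i}"
      proof (cases "i \<in> ?A")
        case True
        hence "i = k" "u = w ! Suc k" by (simp_all split: if_splits)
        thus ?thesis using re_nth[of k] k by simp
      next
        case False
        hence "i \<in> ?B" using h by simp
        hence "i = k - 1" "u = w ! (k - 1)" by (simp_all split: if_splits)
        moreover have "Suc (k - 1) = k" using k by simp
        ultimately show ?thesis using re_nth[of "k - 1"] k by (simp add: insert_commute)
      qed
    qed
  qed
  also have "card (?A \<union> ?B) = (if u = w ! (k - 1) then 1 else 0) + (if u = w ! Suc k then 1 else 0)"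
  proof -
    have "k \<noteq> k - 1" using k by simp
    thus ?thesis by (cases "u = w ! Suc k"; cases "u = w ! (k - 1)") auto
  qed
  finally show ?thesis .
qed

end

context rt begin

lemma in_routes_wloc: assumes "in_routes dep Vp x R" shows "wloc dep R"
  using assms depn unfolding in_routes_def by unfold_locales auto

lemma locr:
  assumes ir: "in_routes dep Vp x R" and k: "1 \<le> k" "k \<le> length R"
    and u: "u \<in> V" "u \<noteq> (wl dep R) ! k"
  shows "x {(wl dep R) ! k, u} =
     (if u = (wl dep R) ! (k - 1) then 1 else 0) + (if u = (wl dep R) ! Suc k then 1 else 0)"
proof -
  interpret wloc dep R using in_routes_wloc[OF ir] .
  let ?c = "w ! k"
  have c: "?c \<in> set R" using wcust k by auto
  have cV: "?c \<in> Vp" using c ir unfolding in_routes_def by auto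
  have e: "{?c, u} \<in> edges dep Vp" using edge_mem cV u by auto
  have "{?c, u} \<inter> set R \<noteq> {}" using c by auto
  moreover have "\<forall>e\<in>edges dep Vp. e \<inter> set R \<noteq> {} \<longrightarrow> x e = real (count_list (route_edges dep R) e)"
    using ir unfolding in_routes_def by simp
  ultimately have "x {?c, u} = real (count_list (route_edges dep R) {?c, u})"
    using e by (meson bspec)
  also have "\<dots> = (if u = w ! (k - 1) then 1 else 0) + (if u = w ! Suc k then 1 else 0)"
    unfolding cnt[OF k u(2)] by (cases "u = w ! (k - 1)"; cases "u = w ! Suc k") simp_all
  finally show ?thesis .
qed

definition path_v :: "'v \<Rightarrow> 'v list \<Rightarrow> bool" where
  "path_v v L \<longleftrightarrow> L \<noteq> [] \<and> distinct L \<and> set L \<subseteq> Vp \<and> v \<in> set L \<and>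
     (\<forall>i. Suc i < length L \<longrightarrow> x {L ! i, L ! Suc i} \<ge> 1)"

lemma path_rev: assumes "path_v v L" shows "path_v v (rev L)"
proof -
  have "x {rev L ! i, rev L ! Suc i} \<ge> 1" if i: "Suc i < length L" for i
  proof -
    let ?j = "length L - Suc (Suc i)"
    have "rev L ! i = L ! Suc ?j" "rev L ! Suc i = L ! ?j" using i
      by (auto simp: rev_nth Suc_diff_Suc)
    moreover have "x {L ! ?j, L ! Suc ?j} \<ge> 1" using assms i unfolding path_v_def by auto
    ultimately show ?thesis by (simp add: insert_commute)
  qed
  thus ?thesis using assms unfolding path_v_def by auto
qed

lemma xge1: assumes "u \<in> V" "v \<in> V" "u \<noteq> v" "x {u,v} > 0" shows "x {u,v} \<ge> 1"
  using x012[OF assms(1-3)] assms(4) by auto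

lemma split_sum: assumes c: "c \<in> Vp"
  shows "(\<Sum>u\<in>V - {c}. x {c,u}) = x {c,dep} + (\<Sum>u\<in>Vp - {c}. x {c,u})"
proof -
  have "V - {c} = insert dep (Vp - {c})" using c depn by auto
  moreover have "dep \<notin> Vp - {c}" using depn by auto
  ultimately show ?thesis using finV by simp
qed

lemma exists_pos: assumes "finite S" "(\<Sum>u\<in>S. f u) > (0::real)" shows "\<exists>u\<in>S. f u > 0"
proof (rule ccontr)
  assume "\<not> ?thesis"
  hence "(\<Sum>u\<in>S. f u) \<le> 0" by (intro sum_nonpos) auto
  thus False using assms by simp
qed

lemma head:
  assumes P: "path_v v L" and mx: "\<forall>L'. path_v v L' \<longrightarrow> length L' \<le> length L"
  shows "(length L = 1 \<longrightarrow> x {dep, L ! 0} = 2) \<and> (length L \<ge> 2 \<longrightarrow> x {dep, L ! 0} \<ge> 1)"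
proof -
  obtain c L1 where L: "L = c # L1" using P unfolding path_v_def by (cases L) auto
  have cV: "c \<in> Vp" using P L unfolding path_v_def by auto
  have nn: "\<And>u. u \<in> V - {c} \<Longrightarrow> 0 \<le> x {c,u}" using cV xb(2) by auto
  have x0: "0 \<le> x {c,dep}" using cV depn xb(2) by auto
  have xd: "x {c,dep} = 0 \<or> x {c,dep} = 1 \<or> x {c,dep} = 2" using x012 cV depn by auto
  have ext: False if u: "u \<in> Vp" "u \<notin> set L" "x {c,u} \<ge> 1" for u
  proof -
    have "path_v v (u # L)"
    proof -
      have "x {(u#L) ! i, (u#L) ! Suc i} \<ge> 1" if i: "Suc i < length (u#L)" for i
      proof (cases i)
        case 0
        have "{u, c} = {c, u}" by blast
        thus ?thesis using u L 0 by simp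
      next
        case (Suc j) thus ?thesis using P i unfolding path_v_def by auto
      qed
      thus ?thesis using P u unfolding path_v_def by auto
    qed
    thus False using mx by fastforce
  qed
  show ?thesis
  proof (intro conjI impI)
    assume l1: "length L = 1"
    hence L1: "L1 = []" using L by simp
    show "x {dep, L ! 0} = 2"
    proof (rule ccontr)
      assume ne: "x {dep, L ! 0} \<noteq> 2"
      hence "x {c,dep} \<le> 1" using xd L by (auto simp: insert_commute)
      hence "(\<Sum>u\<in>Vp - {c}. x {c,u}) > 0" using deg[OF cV] split_sum[OF cV] by linarith
      then obtain u where u: "u \<in> Vp - {c}" "x {c,u} > 0" using exists_pos finV by blast
      have "x {c,u} \<ge> 1" using xge1[of c u] u cV by auto
      thus False using ext[of u] u L L1 by auto
    qed
  next
    assume l2: "length L \<ge> 2"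
    then obtain b L2 where L1: "L1 = b # L2" using L by (cases L1) auto
    have bV: "b \<in> Vp" "b \<noteq> c" using P L L1 unfolding path_v_def by auto
    have xcb: "x {c,b} = 1" using P L L1 claimA[of c b] cV bV unfolding path_v_def by fastforce
    show "x {dep, L ! 0} \<ge> 1"
    proof (rule ccontr)
      assume "\<not> x {dep, L ! 0} \<ge> 1"
      hence "x {c,dep} = 0" using xd L by (auto simp: insert_commute)
      hence s: "(\<Sum>u\<in>Vp - {c}. x {c,u}) = 2" using deg[OF cV] split_sum[OF cV] by linarith
      have "(\<Sum>u\<in>Vp - {c}. x {c,u}) = x {c,b} + (\<Sum>u\<in>Vp - {c} - {b}. x {c,u})"
        using bV finV sum.remove[of "Vp - {c}" b "\<lambda>u. x {c,u}"] by auto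
      hence "(\<Sum>u\<in>Vp - {c} - {b}. x {c,u}) > 0" using s xcb by linarith
      then obtain u where u: "u \<in> Vp - {c} - {b}" "x {c,u} > 0" using exists_pos finV
        by (metis finite_Diff)
      have xu: "x {c,u} \<ge> 1" using xge1[of c u] u cV by auto
      show False
      proof (cases "u \<in> set L")
        case False thus False using ext[of u] u xu by auto
      next
        case True
        then obtain j where j: "j < length L" "L ! j = u" by (auto simp: in_set_conv_nth)
        have "L!0 = c" "L!1 = b" using L L1 by simp_all
        hence L01: "L!0 = c" "L!1 = b" .
        have "j \<noteq> 0" proof assume "j = 0" thus False using j(2) u L01 by simp qed
        moreover have "j \<noteq> 1" proof assume "j = 1" thus False using j(2) u L01 by simp qed
        ultimately have j2: "j \<ge> 2" by simp
        let ?M = "take (Suc j) L"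
        have lenM: "length ?M = Suc j" using j by simp
        have "distinct ?M" "set ?M \<subseteq> Vp" using P unfolding path_v_def
          by (auto dest: in_set_takeD)
        moreover have "length ?M \<ge> 3" using lenM j2 by simp
        moreover have "\<forall>i. Suc i < length ?M \<longrightarrow> x {?M ! i, ?M ! Suc i} \<ge> 1"
        proof (intro allI impI)
          fix i assume i: "Suc i < length ?M"
          hence "?M ! i = L ! i" "?M ! Suc i = L ! Suc i" "Suc i < length L" using lenM j by simp_all
          thus "x {?M ! i, ?M ! Suc i} \<ge> 1" using P unfolding path_v_def by simp
        qed
        moreover have "x {?M ! 0, ?M ! (length ?M - 1)} \<ge> 1"
        proof -
          have "?M ! 0 = L ! 0" "?M ! (length ?M - 1) = L ! j" using lenM by (simp_all add: nth_take)
          thus ?thesis using L01 j(2) xu by simp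
        qed
        ultimately show False using cyc by blast
      qed
    qed
  qed
qed

end

context rt begin

lemma in_routes_of_path:
  assumes P: "path_v v L" and mx: "\<forall>L'. path_v v L' \<longrightarrow> length L' \<le> length L"
  shows "in_routes dep Vp x L"
proof -
  have Lne: "L \<noteq> []" and dL: "distinct L" and sL: "set L \<subseteq> Vp"
    and cons: "\<forall>i. Suc i < length L \<longrightarrow> x {L ! i, L ! Suc i} \<ge> 1"
    using P unfolding path_v_def by auto
  have depL: "dep \<notin> set L" using sL depn by auto
  interpret wloc dep L using dL depL Lne by unfold_locales
  have h1: "(l = 1 \<longrightarrow> x {dep, L ! 0} = 2) \<and> (l \<ge> 2 \<longrightarrow> x {dep, L ! 0} \<ge> 1)"
    using head[OF P mx] by simp
  have mx': "\<forall>L'. path_v v L' \<longrightarrow> length L' \<le> length (rev L)" using mx by simp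
  have h2: "(l = 1 \<longrightarrow> x {dep, rev L ! 0} = 2) \<and> (l \<ge> 2 \<longrightarrow> x {dep, rev L ! 0} \<ge> 1)"
    using head[OF path_rev[OF P] mx'] by simp
  have rev0: "rev L ! 0 = L ! (l - 1)" using Lne by (simp add: rev_nth)
  have d0: "x {dep, L ! 0} \<ge> 1" using h1 l1 by (cases "l = 1") auto
  have dl: "x {dep, L ! (l - 1)} \<ge> 1" using h2 l1 rev0 by (cases "l = 1") auto
  have wcons: "x {w ! i, w ! Suc i} \<ge> 1" if i: "i \<le> l" for i
  proof (cases "i = 0")
    case True
    have "w ! Suc 0 = L ! 0" using wcust(1)[of 1] l1 by simp
    thus ?thesis using True w0 d0 by simp
  next
    case False
    show ?thesis
    proof (cases "i = l")
      case True
      have "w ! l = L ! (l - 1)" using wcust(1)[of l] l1 by simp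
      moreover have "{L ! (l - 1), dep} = {dep, L ! (l - 1)}" by blast
      ultimately show ?thesis using True wl dl by simp
    next
      case False2: False
      have "w ! i = L ! (i - 1)" using wcust(1)[of i] i False by simp
      moreover have "w ! Suc i = L ! i" using wcust(1)[of "Suc i"] i False False2 by simp
      moreover have "Suc (i - 1) = i" "Suc (i - 1) < l" using False False2 i by auto
      ultimately show ?thesis using cons[rule_format, of "i - 1"] by simp
    qed
  qed
  have main: "x e = real (count_list (route_edges dep L) e)"
    if e: "e \<in> edges dep Vp" "e \<inter> set L \<noteq> {}" for e
  proof -
    obtain p q where pq: "e = {p,q}" "p \<in> V" "q \<in> V" "p \<noteq> q"
      using e(1) unfolding edges_def verts_def by blast
    obtain c where c: "c \<in> e" "c \<in> set L" using e(2) by blast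
    obtain u where u: "e = {c,u}" "u \<in> V" "u \<noteq> c"
    proof (cases "c = p")
      case True thus ?thesis using that pq by blast
    next
      case False hence "c = q" using c pq by blast
      moreover have "{p,q} = {q,p}" by blast
      ultimately show ?thesis using that pq by metis
    qed
    obtain k0 where k0: "k0 < l" "L ! k0 = c" using c(2) by (auto simp: in_set_conv_nth)
    define k where "k = Suc k0"
    have k: "1 \<le> k" "k \<le> l" using k0 k_def by auto
    have wk: "w ! k = c" using wcust(1)[OF k] k0 k_def by simp
    have cV: "c \<in> Vp" using c sL by auto
    let ?a = "w ! (k - 1)" and ?b = "w ! Suc k"
    have ka: "k - 1 \<le> Suc l" "Suc k \<le> Suc l" using k by auto
    have aV: "?a \<in> V" using wset[OF ka(1)] sL by blast
    have bV: "?b \<in> V" using wset[OF ka(2)] sL by blast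
    have ac: "?a \<noteq> c" using wne[of "k - 1"] k wk by (simp add: k_def)
    have bc: "?b \<noteq> c" using wne[of k] k wk by simp
    have xa: "x {c, ?a} \<ge> 1"
    proof -
      have "x {w ! (k - 1), w ! Suc (k - 1)} \<ge> 1" using wcons[of "k - 1"] k by simp
      moreover have "Suc (k - 1) = k" using k by simp
      moreover have "{?a, c} = {c, ?a}" by blast
      ultimately show ?thesis using wk by simp
    qed
    have xb: "x {c, ?b} \<ge> 1" using wcons[of k] k wk by simp
    have ab: "x {c, ?a} = 2" if eq: "?a = ?b"
    proof -
      have "l = 1" using ab1[OF k eq] .
      hence "k = 1" using k by simp
      hence "?a = dep" "c = L ! 0" using w0 k0 k_def by auto
      moreover have "{c, dep} = {dep, c}" by blast
      ultimately show ?thesis using h1 \<open>l = 1\<close> by simp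
    qed
    have "x {c,u} = (if u = ?a then 1 else 0) + (if u = ?b then 1 else 0)"
      using loc[OF cV aV ac bV bc xa xb ab u(2,3)] by simp
    moreover have "count_list (route_edges dep L) {w ! k, u} =
       (if u = ?a then 1 else 0) + (if u = ?b then 1 else 0)"
      using cnt[OF k] u(3) wk by simp
    ultimately show ?thesis using u(1) wk by (cases "u = ?a"; cases "u = ?b") simp_all
  qed
  show ?thesis unfolding in_routes_def using Lne dL sL main by blast
qed

lemma route_exists: assumes v: "v \<in> Vp" shows "\<exists>R. in_routes dep Vp x R \<and> v \<in> set R"
proof -
  define Q where "Q n \<longleftrightarrow> (\<exists>L. path_v v L \<and> length L = n)" for n
  have "path_v v [v]" using v unfolding path_v_def by simp
  hence q1: "Q 1" unfolding Q_def by force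
  have bnd: "\<forall>n. Q n \<longrightarrow> n \<le> card Vp"
  proof (intro allI impI)
    fix n assume "Q n"
    then obtain L where L: "path_v v L" "length L = n" unfolding Q_def by blast
    hence "card (set L) = n" "set L \<subseteq> Vp" unfolding path_v_def by (auto simp: distinct_card)
    thus "n \<le> card Vp" using card_mono[OF finV] by metis
  qed
  obtain n where n: "Q n" "\<forall>m. Q m \<longrightarrow> m \<le> n" using Nat.ex_has_greatest_nat[OF q1 bnd] by blast
  obtain L where L: "path_v v L" "length L = n" using n(1) unfolding Q_def by blast
  have mx: "\<forall>L'. path_v v L' \<longrightarrow> length L' \<le> length L"
    using n(2) L(2) unfolding Q_def by blast
  have "in_routes dep Vp x L" using in_routes_of_path[OF L(1) mx] .
  moreover have "v \<in> set L" using L(1) unfolding path_v_def by simp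
  ultimately show ?thesis by blast
qed

end

lemma chain_nat: assumes "\<forall>j. Suc j < n \<longrightarrow> (P j \<longleftrightarrow> P (Suc j))" "i < n" shows "P i \<longleftrightarrow> P 0"
  using assms(2)
proof (induction i)
  case 0 thus ?case by simp
next
  case (Suc i) thus ?case using assms(1) by auto
qed

context rt begin

lemma xsym: "x {u,v} = x {v,u}"
proof -
  have "{u,v} = {v,u}" by blast
  thus ?thesis by simp
qed

lemma arcs_in: assumes "c \<in> V"
  shows "(\<Sum>a\<in>{a\<in>arcs dep Vp. snd a = c}. h a) = (\<Sum>u\<in>V - {c}. h (u,c))"
proof -
  have "{a\<in>arcs dep Vp. snd a = c} = (\<lambda>u. (u,c)) ` (V - {c})"
    using assms unfolding arcs_def verts_def by auto
  moreover have "inj_on (\<lambda>u. (u,c)) (V - {c})" by (rule inj_onI) simp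
  ultimately show ?thesis by (simp add: sum.reindex)
qed

lemma arcs_out: assumes "c \<in> V"
  shows "(\<Sum>a\<in>{a\<in>arcs dep Vp. fst a = c}. h a) = (\<Sum>u\<in>V - {c}. h (c,u))"
proof -
  have "{a\<in>arcs dep Vp. fst a = c} = (\<lambda>u. (c,u)) ` (V - {c})"
    using assms unfolding arcs_def verts_def by auto
  moreover have "inj_on (\<lambda>u. (c,u)) (V - {c})" by (rule inj_onI) simp
  ultimately show ?thesis by (simp add: sum.reindex)
qed

lemma arc_mem: "(u,v) \<in> arcs dep Vp \<longleftrightarrow> u \<in> V \<and> v \<in> V \<and> u \<noteq> v"
  unfolding arcs_def verts_def by auto

lemma sumloc:
  assumes c: "c \<in> Vp" and a: "a \<in> V - {c}" and b: "b \<in> V - {c}"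
    and z: "\<And>u. u \<in> V - {c} \<Longrightarrow> u \<noteq> a \<Longrightarrow> u \<noteq> b \<Longrightarrow> h u = (0::real)"
  shows "(\<Sum>u\<in>V - {c}. h u) = (if a = b then h a else h a + h b)"
proof -
  have "(\<Sum>u\<in>V - {c}. h u) = (\<Sum>u\<in>{a,b}. h u)"
    using a b z finV by (intro sum.mono_neutral_right) auto
  thus ?thesis by (cases "a = b") auto
qed

lemma nbr:
  assumes ir: "in_routes dep Vp x R" and c: "c \<in> set R" and u: "u \<in> Vp" "u \<noteq> c" and xu: "x {c,u} \<noteq> 0"
  shows "u \<in> set R"
proof -
  interpret wloc dep R using in_routes_wloc[OF ir] .
  obtain k0 where k0: "k0 < l" "R ! k0 = c" using c by (auto simp: in_set_conv_nth)
  have k: "1 \<le> Suc k0" "Suc k0 \<le> l" using k0 by auto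
  have wk: "w ! Suc k0 = c" using wcust(1)[OF k] k0 by simp
  have uV: "u \<in> V" using u by simp
  have "x {c,u} = (if u = w ! (Suc k0 - 1) then 1 else 0) + (if u = w ! Suc (Suc k0) then 1 else 0)"
    using locr[OF ir k, of u] uV u wk by simp
  hence "u = w ! k0 \<or> u = w ! Suc (Suc k0)" using xu by (auto split: if_splits)
  moreover have "k0 \<le> Suc l" "Suc (Suc k0) \<le> Suc l" using k0 by auto
  ultimately have "u \<in> insert dep (set R)" using wset by blast
  thus ?thesis using u depn by auto
qed

lemma cons_ge1:
  assumes ir: "in_routes dep Vp x R" and j: "Suc j < length R"
  shows "x {R ! j, R ! Suc j} \<ge> 1"
proof -
  interpret wloc dep R using in_routes_wloc[OF ir] .
  have k: "1 \<le> Suc j" "Suc j \<le> l" using j by auto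
  have k2: "1 \<le> Suc (Suc j)" "Suc (Suc j) \<le> l" using j by auto
  have wk: "w ! Suc j = R ! j" using wcust(1)[OF k] by simp
  have wk2: "w ! Suc (Suc j) = R ! Suc j" using wcust(1)[OF k2] by simp
  have ne: "R ! Suc j \<noteq> R ! j" using dR j by (simp add: nth_eq_iff_index_eq)
  have "R ! Suc j \<in> set R" using j by simp
  hence "R ! Suc j \<in> V" using ir unfolding in_routes_def by auto
  hence "x {R ! j, R ! Suc j} = (if R ! Suc j = w ! (Suc j - 1) then 1 else 0) + 1"
    using locr[OF ir k, of "R ! Suc j"] ne wk wk2 by simp
  thus ?thesis by simp
qed

lemma route_sub:
  assumes ir: "in_routes dep Vp x R" and ir': "in_routes dep Vp x R'"
    and c: "c \<in> set R" "c \<in> set R'"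
  shows "set R \<subseteq> set R'"
proof -
  have sR: "set R \<subseteq> Vp" using ir unfolding in_routes_def by simp
  have dR: "distinct R" using ir unfolding in_routes_def by simp
  have step: "\<forall>j. Suc j < length R \<longrightarrow> (R ! j \<in> set R' \<longleftrightarrow> R ! Suc j \<in> set R')"
  proof (intro allI impI)
    fix j assume j: "Suc j < length R"
    have x1: "x {R ! j, R ! Suc j} \<ge> 1" using cons_ge1[OF ir j] .
    have ne: "R ! Suc j \<noteq> R ! j" using dR j by (simp add: nth_eq_iff_index_eq)
    have m: "R ! j \<in> Vp" "R ! Suc j \<in> Vp" using sR j by auto
    show "R ! j \<in> set R' \<longleftrightarrow> R ! Suc j \<in> set R'"
    proof
      assume "R ! j \<in> set R'"
      thus "R ! Suc j \<in> set R'" using nbr[OF ir', of "R ! j" "R ! Suc j"] m ne x1 by simp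
    next
      assume "R ! Suc j \<in> set R'"
      moreover have "x {R ! Suc j, R ! j} \<noteq> 0" using x1 xsym[of "R ! j"] by simp
      ultimately show "R ! j \<in> set R'" using nbr[OF ir', of "R ! Suc j" "R ! j"] m ne by simp
    qed
  qed
  obtain i0 where i0: "i0 < length R" "R ! i0 = c" using c(1) by (auto simp: in_set_conv_nth)
  have "R ! 0 \<in> set R'" using chain_nat[OF step i0(1)] i0 c(2) by simp
  hence "\<forall>i < length R. R ! i \<in> set R'" using chain_nat[OF step] by blast
  thus ?thesis by (auto simp: in_set_conv_nth)
qed

lemma canon_routes:
  "\<exists>rte. (\<forall>c\<in>Vp. in_routes dep Vp x (rte c) \<and> c \<in> set (rte c)) \<and>
         (\<forall>c\<in>Vp. \<forall>u\<in>set (rte c). rte u = rte c)"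
proof -
  define T where "T c = set (SOME R. in_routes dep Vp x R \<and> c \<in> set R)" for c
  define rte where "rte c = (SOME R. in_routes dep Vp x R \<and> set R = T c)" for c
  have T: "\<exists>R. in_routes dep Vp x R \<and> c \<in> set R \<and> set R = T c" if "c \<in> Vp" for c
  proof -
    have "in_routes dep Vp x (SOME R. in_routes dep Vp x R \<and> c \<in> set R) \<and>
          c \<in> set (SOME R. in_routes dep Vp x R \<and> c \<in> set R)"
      using someI_ex[OF route_exists[OF that]] .
    thus ?thesis unfolding T_def by blast
  qed
  have r1: "in_routes dep Vp x (rte c) \<and> set (rte c) = T c" if "c \<in> Vp" for c
  proof -
    have "\<exists>R. in_routes dep Vp x R \<and> set R = T c" using T[OF that] by blast
    thus ?thesis unfolding rte_def by (rule someI_ex)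
  qed
  have r2: "c \<in> set (rte c)" if "c \<in> Vp" for c
    using r1[OF that] T[OF that] by auto
  have r3: "rte u = rte c" if c: "c \<in> Vp" and u: "u \<in> set (rte c)" for c u
  proof -
    have uV: "u \<in> Vp" using u r1[OF c] unfolding in_routes_def by auto
    obtain R where R: "in_routes dep Vp x R" "u \<in> set R" "set R = T u" using T[OF uV] by blast
    have ir: "in_routes dep Vp x (rte c)" using r1[OF c] by simp
    have "set R = set (rte c)"
      using route_sub[OF R(1) ir R(2) u] route_sub[OF ir R(1) u R(2)] by blast
    hence "T u = T c" using R(3) r1[OF c] by simp
    thus ?thesis unfolding rte_def by simp
  qed
  show ?thesis using r1 r2 r3 by blast
qed

end

definition fwd :: "'v \<Rightarrow> 'v list \<Rightarrow> 'v \<times> 'v \<Rightarrow> bool" where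
  "fwd dep R a \<longleftrightarrow> (\<exists>i\<in>{1..Suc (length R)}. wl dep R ! (i - 1) = fst a \<and> wl dep R ! i = snd a)"

definition Fl :: "('v set \<Rightarrow> real) \<Rightarrow> real \<Rightarrow> 'v \<Rightarrow> 'v list \<Rightarrow> ('v \<times> 'v \<Rightarrow> real) \<Rightarrow> 'v \<times> 'v \<Rightarrow> real" where
  "Fl x C dep R fr a = (if x {fst a, snd a} = 0 then 0
     else if fwd dep R a \<and> x {fst a, snd a} = 2 then fr a
     else if fwd dep R a then fr a / 2
     else if fwd dep R (snd a, fst a) then (C - fr (snd a, fst a)) / 2 else 0)"

context rt begin

lemma xle: assumes "u \<in> V" "v \<in> V" "u \<noteq> v" "x {u,v} \<le> 1" "0 \<le> C" shows "C / 2 * x {u,v} \<le> C / 2"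
  using assms mult_left_mono[of "x {u,v}" 1 "C/2"] by simp

lemma dir1:
  fixes C :: real and f0 :: "'v \<times> 'v \<Rightarrow> real" and g0 dd yy :: "'v \<Rightarrow> real"
  assumes C: "C > 0" and ir: "in_routes dep Vp x R"
    and f0nn: "\<forall>a\<in>arcs dep Vp. 0 \<le> f0 a" and g0nn: "\<forall>v\<in>Vp. 0 \<le> g0 v"
    and cons: "\<forall>v\<in>Vp. (\<Sum>a\<in>{a\<in>arcs dep Vp. snd a = v}. f0 a) + dd v = (\<Sum>a\<in>{a\<in>arcs dep Vp. fst a = v}. f0 a) + g0 v"
    and cap: "\<forall>(u,v)\<in>arcs dep Vp. f0 (u,v) \<le> C / 2 * x {u,v}"
    and gy: "\<forall>v\<in>Vp. g0 v \<le> C * yy v"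
  shows "\<exists>f g. (\<forall>a\<in>arcs dep Vp. 0 \<le> f a) \<and> (\<forall>v\<in>Vp. 0 \<le> g v) \<and>
    (\<forall>i\<in>{1..length R}. f (wl dep R ! (i - 1), wl dep R ! i) + dd (wl dep R ! i) = f (wl dep R ! i, wl dep R ! (i + 1)) + g (wl dep R ! i)) \<and>
    (\<forall>i\<in>{1..length R + 1}. f (wl dep R ! (i - 1), wl dep R ! i) \<le> C) \<and>
    (\<forall>i\<in>{1..length R}. g (wl dep R ! i) \<le> C * yy (wl dep R ! i))"
proof -
  interpret wloc dep R using in_routes_wloc[OF ir] .
  have sR: "set R \<subseteq> Vp" using ir unfolding in_routes_def by simp
  define f' where "f' a = (if x {fst a, snd a} \<le> 1 then C / 2 + f0 a - f0 (snd a, fst a) else f0 a)" for a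
  have capf: "0 \<le> f' (u,v) \<and> f' (u,v) \<le> C" if uv: "(u,v) \<in> arcs dep Vp" for u v
  proof -
    have m: "u \<in> V" "v \<in> V" "u \<noteq> v" using uv arc_mem by auto
    have vu: "(v,u) \<in> arcs dep Vp" using m arc_mem by auto
    have a1: "0 \<le> f0 (u,v)" "0 \<le> f0 (v,u)" using f0nn uv vu by auto
    have a2: "f0 (u,v) \<le> C / 2 * x {u,v}" using cap uv by auto
    have a3: "f0 (v,u) \<le> C / 2 * x {u,v}" using cap vu xsym[of v u] by auto
    have x2: "x {u,v} \<le> 2" using xb(3)[OF m] .
    show ?thesis
    proof (cases "x {u,v} \<le> 1")
      case True
      have "C / 2 * x {u,v} \<le> C / 2" using xle[OF m True] C by simp
      thus ?thesis using True a1 a2 a3 unfolding f'_def by simp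
    next
      case False
      have "C / 2 * x {u,v} \<le> C / 2 * 2" using x2 C by (intro mult_left_mono) auto
      thus ?thesis using False a1 a2 unfolding f'_def by simp
    qed
  qed
  have consR: "f' (w ! (i - 1), w ! i) + dd (w ! i) = f' (w ! i, w ! (i + 1)) + g0 (w ! i)"
    if i: "i \<in> {1..l}" for i
  proof -
    have k: "1 \<le> i" "i \<le> l" using i by auto
    let ?c = "w ! i" and ?a = "w ! (i - 1)" and ?b = "w ! Suc i"
    have cV: "?c \<in> Vp" using wcust(2)[OF k] sR by auto
    have ka: "i - 1 \<le> Suc l" "Suc i \<le> Suc l" using k by auto
    have aV: "?a \<in> V" using wset[OF ka(1)] sR by blast
    have bV: "?b \<in> V" using wset[OF ka(2)] sR by blast
    have ac: "?a \<noteq> ?c" using wne[of "i - 1"] k by simp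
    have bc: "?b \<noteq> ?c" using wne[of i] k by simp
    have lx: "x {?c, u} = (if u = ?a then 1 else 0) + (if u = ?b then 1 else 0)" if "u \<in> V" "u \<noteq> ?c" for u
      using locr[OF ir k that] .
    have z: "f0 (u, ?c) = 0 \<and> f0 (?c, u) = 0" if u: "u \<in> V - {?c}" "u \<noteq> ?a" "u \<noteq> ?b" for u
    proof -
      have "x {?c, u} = 0" using lx u by simp
      moreover have "(u, ?c) \<in> arcs dep Vp" "(?c, u) \<in> arcs dep Vp" using u cV arc_mem by auto
      ultimately show ?thesis using cap f0nn xsym[of u ?c] by fastforce
    qed
    have sin: "(\<Sum>u\<in>V - {?c}. f0 (u, ?c)) = (if ?a = ?b then f0 (?a, ?c) else f0 (?a, ?c) + f0 (?b, ?c))"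
      using sumloc[OF cV, of ?a ?b "\<lambda>u. f0 (u, ?c)"] aV bV ac bc z by simp
    have sout: "(\<Sum>u\<in>V - {?c}. f0 (?c, u)) = (if ?a = ?b then f0 (?c, ?a) else f0 (?c, ?a) + f0 (?c, ?b))"
      using sumloc[OF cV, of ?a ?b "\<lambda>u. f0 (?c, u)"] aV bV ac bc z by simp
    have c0: "(\<Sum>a\<in>{a\<in>arcs dep Vp. snd a = ?c}. f0 a) + dd ?c = (\<Sum>a\<in>{a\<in>arcs dep Vp. fst a = ?c}. f0 a) + g0 ?c"
      using cons cV by blast
    have cV': "?c \<in> V" using cV by simp
    have cc: "(\<Sum>u\<in>V - {?c}. f0 (u, ?c)) + dd ?c = (\<Sum>u\<in>V - {?c}. f0 (?c, u)) + g0 ?c"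
      using c0 unfolding arcs_in[OF cV'] arcs_out[OF cV'] .
    show ?thesis
    proof (cases "?a = ?b")
      case True
      have "x {?c, ?a} = 2" using lx[OF aV ac] True by simp
      hence "f' (?a, ?c) = f0 (?a, ?c)" "f' (?c, ?b) = f0 (?c, ?a)"
        unfolding f'_def using xsym[of ?a ?c] True by simp_all
      thus ?thesis using cc sin sout True by simp
    next
      case False
      have "x {?c, ?a} = 1" "x {?c, ?b} = 1" using lx[OF aV ac] lx[OF bV bc] False by simp_all
      hence "f' (?a, ?c) = C / 2 + f0 (?a, ?c) - f0 (?c, ?a)" "f' (?c, ?b) = C / 2 + f0 (?c, ?b) - f0 (?b, ?c)"
        unfolding f'_def using xsym[of ?a ?c] by simp_all
      thus ?thesis using cc sin sout False by simp
    qed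
  qed
  have capR: "f' (w ! (i - 1), w ! i) \<le> C" if i: "i \<in> {1..l + 1}" for i
  proof -
    have ka: "i - 1 \<le> Suc l" "i \<le> Suc l" "i - 1 \<le> l" using i by auto
    have "w ! (i - 1) \<in> V" "w ! i \<in> V" using wset[OF ka(1)] wset[OF ka(2)] sR by blast+
    moreover have "w ! (i - 1) \<noteq> w ! i" using wne[OF ka(3)] i by simp
    ultimately have "(w ! (i - 1), w ! i) \<in> arcs dep Vp" using arc_mem by simp
    thus ?thesis using capf by blast
  qed
  have gR: "g0 (w ! i) \<le> C * yy (w ! i)" if i: "i \<in> {1..l}" for i
    using gy wcust(2)[of i] i sR by auto
  have nn: "\<forall>a\<in>arcs dep Vp. 0 \<le> f' a" using capf by auto
  show ?thesis using nn g0nn consR capR gR by blast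
qed

end

context rt begin

lemma Fl_cap:
  assumes C: "C > 0" and ir: "in_routes dep Vp x R"
    and frnn: "\<forall>a\<in>arcs dep Vp. 0 \<le> fr a"
    and frc: "\<forall>i\<in>{1..length R + 1}. fr (wl dep R ! (i - 1), wl dep R ! i) \<le> C"
    and uv: "(u,v) \<in> arcs dep Vp"
  shows "0 \<le> Fl x C dep R fr (u,v) \<and> Fl x C dep R fr (u,v) \<le> C / 2 * x {u,v}"
proof -
  have m: "u \<in> V" "v \<in> V" "u \<noteq> v" using uv arc_mem by auto
  have vu: "(v,u) \<in> arcs dep Vp" using m arc_mem by auto
  have fc: "fr a \<le> C" if fa: "fwd dep R a" for a
  proof -
    obtain i where i: "i \<in> {1..Suc (length R)}" "wl dep R ! (i - 1) = fst a" "wl dep R ! i = snd a"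
      using fa unfolding fwd_def by blast
    have "i \<in> {1..length R + 1}" using i(1) by simp
    hence "fr (wl dep R ! (i - 1), wl dep R ! i) \<le> C" using frc by blast
    thus ?thesis using i(2,3) by simp
  qed
  have x0: "0 \<le> x {u,v}" using xb(2)[OF m] .
  have nn: "0 \<le> fr (u,v)" "0 \<le> fr (v,u)" using frnn uv vu by auto
  consider "x {u,v} = 0" | "x {u,v} = 1" | "x {u,v} = 2" using x012[OF m] by blast
  thus ?thesis
  proof cases
    case 1 thus ?thesis unfolding Fl_def by simp
  next
    case 2
    show ?thesis
    proof (cases "fwd dep R (u,v)")
      case True thus ?thesis using 2 fc[of "(u,v)"] nn C unfolding Fl_def by simp
    next
      case False
      thus ?thesis using 2 fc[of "(v,u)"] nn C unfolding Fl_def by simp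
    qed
  next
    case 3
    show ?thesis
    proof (cases "fwd dep R (u,v)")
      case True thus ?thesis using 3 fc[of "(u,v)"] nn C unfolding Fl_def by simp
    next
      case False
      thus ?thesis using 3 fc[of "(v,u)"] nn C unfolding Fl_def by simp
    qed
  qed
qed

lemma Fl_cons:
  assumes ir: "in_routes dep Vp x R"
    and cons: "\<forall>i\<in>{1..length R}. fr (wl dep R ! (i - 1), wl dep R ! i) + dd (wl dep R ! i) = fr (wl dep R ! i, wl dep R ! (i + 1)) + gr (wl dep R ! i)"
    and k: "1 \<le> k" "k \<le> length R"
  shows "(\<Sum>u\<in>V - {wl dep R ! k}. Fl x C dep R fr (u, wl dep R ! k)) + dd (wl dep R ! k) =
         (\<Sum>u\<in>V - {wl dep R ! k}. Fl x C dep R fr (wl dep R ! k, u)) + gr (wl dep R ! k)"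
proof -
  interpret wloc dep R using in_routes_wloc[OF ir] .
  have sR: "set R \<subseteq> Vp" using ir unfolding in_routes_def by simp
  let ?c = "w ! k" and ?a = "w ! (k - 1)" and ?b = "w ! Suc k"
  let ?F = "Fl x C dep R fr"
  have cV: "?c \<in> Vp" using wcust(2)[OF k] sR by auto
  have ka: "k - 1 \<le> Suc l" "Suc k \<le> Suc l" using k by auto
  have aV: "?a \<in> V" using wset[OF ka(1)] sR by blast
  have bV: "?b \<in> V" using wset[OF ka(2)] sR by blast
  have ac: "?a \<noteq> ?c" using wne[of "k - 1"] k by simp
  have bc: "?b \<noteq> ?c" using wne[of k] k by simp
  have lx: "x {?c, u} = (if u = ?a then 1 else 0) + (if u = ?b then 1 else 0)" if "u \<in> V" "u \<noteq> ?c" for u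
    using locr[OF ir k that] .
  have z: "?F (u, ?c) = 0 \<and> ?F (?c, u) = 0" if u: "u \<in> V - {?c}" "u \<noteq> ?a" "u \<noteq> ?b" for u
  proof -
    have "x {?c, u} = 0" using lx u by simp
    thus ?thesis unfolding Fl_def using xsym[of u ?c] by simp
  qed
  have sin: "(\<Sum>u\<in>V - {?c}. ?F (u, ?c)) = (if ?a = ?b then ?F (?a, ?c) else ?F (?a, ?c) + ?F (?b, ?c))"
    using sumloc[OF cV, of ?a ?b "\<lambda>u. ?F (u, ?c)"] aV bV ac bc z by simp
  have sout: "(\<Sum>u\<in>V - {?c}. ?F (?c, u)) = (if ?a = ?b then ?F (?c, ?a) else ?F (?c, ?a) + ?F (?c, ?b))"
    using sumloc[OF cV, of ?a ?b "\<lambda>u. ?F (?c, u)"] aV bV ac bc z by simp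
  have kk: "k \<in> {1..Suc l}" "Suc k \<in> {1..Suc l}" using k by auto
  have fac: "fwd dep R (?a, ?c)" unfolding fwd_def using kk(1) by force
  have fcb: "fwd dep R (?c, ?b)" unfolding fwd_def using kk(2) by force
  have cs: "fr (?a, ?c) + dd ?c = fr (?c, ?b) + gr ?c" using cons k by simp
  show ?thesis
  proof (cases "?a = ?b")
    case True
    have x2: "x {?c, ?a} = 2" "x {?a, ?c} = 2" using lx[OF aV ac] True xsym[of ?a ?c] by simp_all
    have "?F (?a, ?c) = fr (?a, ?c)" using fac x2 unfolding Fl_def by simp
    moreover have "?F (?c, ?a) = fr (?c, ?a)" using fcb x2 True unfolding Fl_def by simp
    ultimately show ?thesis using sin sout True cs by simp
  next
    case False
    have x1: "x {?c, ?a} = 1" "x {?a, ?c} = 1" "x {?c, ?b} = 1" "x {?b, ?c} = 1"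
      using lx[OF aV ac] lx[OF bV bc] False xsym[of ?a ?c] xsym[of ?b ?c] by simp_all
    have nbc: "\<not> fwd dep R (?b, ?c)"
    proof
      assume "fwd dep R (?b, ?c)"
      then obtain i where i: "i \<in> {1..Suc l}" "w ! (i - 1) = ?b" "w ! i = ?c" unfolding fwd_def by auto
      hence "i = k" using pos[OF k, of i] by simp
      thus False using i False by simp
    qed
    have nca: "\<not> fwd dep R (?c, ?a)"
    proof
      assume "fwd dep R (?c, ?a)"
      then obtain i where i: "i \<in> {1..Suc l}" "w ! (i - 1) = ?c" "w ! i = ?a" unfolding fwd_def by auto
      have "i - 1 \<le> Suc l" using i(1) by auto
      hence "i - 1 = k" using pos[OF k, of "i - 1"] i by simp
      moreover have "1 \<le> i" using i(1) by simp
      ultimately have "i = Suc k" by linarith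
      thus False using i False by simp
    qed
    have "?F (?a, ?c) = fr (?a, ?c) / 2" using fac x1 unfolding Fl_def by simp
    moreover have "?F (?b, ?c) = (C - fr (?c, ?b)) / 2" using fcb nbc x1 unfolding Fl_def by simp
    moreover have "?F (?c, ?b) = fr (?c, ?b) / 2" using fcb x1 unfolding Fl_def by simp
    moreover have "?F (?c, ?a) = (C - fr (?a, ?c)) / 2" using fac nca x1 unfolding Fl_def by simp
    ultimately show ?thesis using sin sout False cs by simp
  qed
qed

end

lemma Yset_iff: "yy \<in> Yset dep Vp C d \<xi> R \<longleftrightarrow> (\<forall>v\<in>Vp. yy v \<in> \<int> \<and> 0 \<le> yy v) \<and>
   (\<exists>f g. (\<forall>a\<in>arcs dep Vp. 0 \<le> f a) \<and> (\<forall>v\<in>Vp. 0 \<le> g v) \<and>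
    (\<forall>i\<in>{1..length R}. f (wl dep R ! (i - 1), wl dep R ! i) + d \<xi> (wl dep R ! i) = f (wl dep R ! i, wl dep R ! (i + 1)) + g (wl dep R ! i)) \<and>
    (\<forall>i\<in>{1..length R + 1}. f (wl dep R ! (i - 1), wl dep R ! i) \<le> C) \<and>
    (\<forall>i\<in>{1..length R}. g (wl dep R ! i) \<le> C * yy (wl dep R ! i)))"
  unfolding Yset_def wl_def Let_def by simp

context rt begin

lemma pos_of: assumes ir: "in_routes dep Vp x R" and c: "c \<in> set R"
  shows "\<exists>k. 1 \<le> k \<and> k \<le> length R \<and> wl dep R ! k = c"
proof -
  interpret wloc dep R using in_routes_wloc[OF ir] .
  obtain k0 where k0: "k0 < l" "R ! k0 = c" using c by (auto simp: in_set_conv_nth)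
  have k: "1 \<le> Suc k0" "Suc k0 \<le> l" using k0 by auto
  have "wl dep R ! Suc k0 = c" using wcust(1)[OF k] k0 by simp
  thus ?thesis using k by blast
qed

end

theorem lemma4:
  fixes dep :: 'v and Vp :: "'v set" and C :: real and N :: nat
    and d :: "nat \<Rightarrow> 'v \<Rightarrow> real" and p :: "nat \<Rightarrow> real" and b :: "'v \<Rightarrow> int"
    and XX :: "('v set \<Rightarrow> real) set" and x :: "'v set \<Rightarrow> real"
  assumes "finite Vp" and "dep \<notin> Vp" and "C > 0"
    and "\<forall>\<xi>\<in>{1..N}. \<forall>v\<in>Vp. d \<xi> v \<in> \<rat> \<and> 0 \<le> d \<xi> v \<and> d \<xi> v \<le> C"
    and "\<forall>\<xi>\<in>{1..N}. 0 \<le> p \<xi>" and "(\<Sum>\<xi>\<in>{1..N}. p \<xi>) = 1"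
    and "\<forall>v\<in>Vp. 0 \<le> b v"
    and "XX = Xsub dep Vp \<or> (\<exists>k::nat. 0 < k \<and> XX = Xcvrp dep Vp C N p d k)"
    and "x \<in> XX" and "\<forall>e\<in>edges dep Vp. x e \<in> \<int>"
  shows "FLOW dep Vp C N d b x \<inter> intpts Vp N = PiX dep Vp C N d x \<inter> box Vp N b"
proof -
  have xs: "x \<in> Xsub dep Vp" using assms(8,9) unfolding Xcvrp_def by auto
  interpret rt dep Vp x using assms(1,2) xs assms(10) by unfold_locales
  have C: "C > 0" using assms(3) .
  show ?thesis
  proof (rule set_eqI, rule iffI)
    fix y assume y: "y \<in> FLOW dep Vp C N d b x \<inter> intpts Vp N"
    hence yb: "y \<in> box Vp N b" and yi: "y \<in> intpts Vp N" unfolding FLOW_def by auto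
    obtain f g where
      fnn: "\<forall>\<xi>\<in>{1..N}. \<forall>a\<in>arcs dep Vp. 0 \<le> f \<xi> a" and
      gnn: "\<forall>\<xi>\<in>{1..N}. \<forall>v\<in>Vp. 0 \<le> g \<xi> v" and
      fc: "\<forall>\<xi>\<in>{1..N}. \<forall>v\<in>Vp.
           (\<Sum>a\<in>{a\<in>arcs dep Vp. snd a = v}. f \<xi> a) + d \<xi> v =
           (\<Sum>a\<in>{a\<in>arcs dep Vp. fst a = v}. f \<xi> a) + g \<xi> v" and
      fcap: "\<forall>\<xi>\<in>{1..N}. \<forall>(u, v)\<in>arcs dep Vp. f \<xi> (u, v) \<le> C / 2 * x {u, v}" and
      gy: "\<forall>\<xi>\<in>{1..N}. \<forall>v\<in>Vp. g \<xi> v \<le> C * y \<xi> v"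
      using y unfolding FLOW_def by blast
    have "y \<in> PiX dep Vp C N d x"
      unfolding PiX_def
    proof (intro CollectI allI impI ballI)
      fix R \<xi> assume ir: "in_routes dep Vp x R" and xi: "\<xi> \<in> {1..N}"
      have p1: "\<forall>v\<in>Vp. y \<xi> v \<in> \<int> \<and> 0 \<le> y \<xi> v"
        using yb yi xi unfolding box_def intpts_def by auto
      have p2: "\<forall>a\<in>arcs dep Vp. 0 \<le> f \<xi> a" "\<forall>v\<in>Vp. 0 \<le> g \<xi> v"
        "\<forall>v\<in>Vp. (\<Sum>a\<in>{a\<in>arcs dep Vp. snd a = v}. f \<xi> a) + d \<xi> v =
           (\<Sum>a\<in>{a\<in>arcs dep Vp. fst a = v}. f \<xi> a) + g \<xi> v"
        "\<forall>(u, v)\<in>arcs dep Vp. f \<xi> (u, v) \<le> C / 2 * x {u, v}"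
        "\<forall>v\<in>Vp. g \<xi> v \<le> C * y \<xi> v"
        using fnn gnn fc fcap gy xi by blast+
      show "y \<xi> \<in> Yset dep Vp C d \<xi> R"
        unfolding Yset_iff using p1 dir1[OF C ir p2] by blast
    qed
    thus "y \<in> PiX dep Vp C N d x \<inter> box Vp N b" using yb by blast
  next
    fix y assume y: "y \<in> PiX dep Vp C N d x \<inter> box Vp N b"
    hence yP: "\<And>R \<xi>. in_routes dep Vp x R \<Longrightarrow> \<xi> \<in> {1..N} \<Longrightarrow> y \<xi> \<in> Yset dep Vp C d \<xi> R"
      and yb: "y \<in> box Vp N b" unfolding PiX_def by auto
    obtain rte where r1: "\<forall>c\<in>Vp. in_routes dep Vp x (rte c) \<and> c \<in> set (rte c)"
      and r2: "\<forall>c\<in>Vp. \<forall>u\<in>set (rte c). rte u = rte c"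
      using canon_routes by blast
    have yi: "y \<in> intpts Vp N"
      unfolding intpts_def
    proof (intro CollectI ballI)
      fix \<xi> v assume xi: "\<xi> \<in> {1..N}" and v: "v \<in> Vp"
      have "y \<xi> \<in> Yset dep Vp C d \<xi> (rte v)" using yP r1 v xi by blast
      thus "y \<xi> v \<in> \<int>" using v unfolding Yset_iff by blast
    qed
    define valid where "valid \<xi> R fr gr \<longleftrightarrow> (\<forall>a\<in>arcs dep Vp. 0 \<le> fr a) \<and> (\<forall>v\<in>Vp. 0 \<le> gr v) \<and>
      (\<forall>i\<in>{1..length R}. fr (wl dep R ! (i - 1), wl dep R ! i) + d \<xi> (wl dep R ! i) = fr (wl dep R ! i, wl dep R ! (i + 1)) + gr (wl dep R ! i)) \<and>
      (\<forall>i\<in>{1..length R + 1}. fr (wl dep R ! (i - 1), wl dep R ! i) \<le> C) \<and>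
      (\<forall>i\<in>{1..length R}. gr (wl dep R ! i) \<le> C * y \<xi> (wl dep R ! i))"
      for \<xi> R and fr :: "'v \<times> 'v \<Rightarrow> real" and gr :: "'v \<Rightarrow> real"
    define FG where "FG \<xi> R = (SOME pr. valid \<xi> R (fst pr) (snd pr))" for \<xi> R
    have FGv: "valid \<xi> (rte c) (fst (FG \<xi> (rte c))) (snd (FG \<xi> (rte c)))"
      if xi: "\<xi> \<in> {1..N}" and c: "c \<in> Vp" for \<xi> c
    proof -
      have "y \<xi> \<in> Yset dep Vp C d \<xi> (rte c)" using yP r1 c xi by blast
      then obtain fr gr where "valid \<xi> (rte c) fr gr" unfolding Yset_iff valid_def by blast
      hence "\<exists>pr. valid \<xi> (rte c) (fst pr) (snd pr)" by (intro exI[of _ "(fr, gr)"]) simp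
      thus ?thesis unfolding FG_def by (rule someI_ex)
    qed
    define ff where "ff \<xi> a = (if fst a \<in> Vp then Fl x C dep (rte (fst a)) (fst (FG \<xi> (rte (fst a)))) a
       else if snd a \<in> Vp then Fl x C dep (rte (snd a)) (fst (FG \<xi> (rte (snd a)))) a else 0)" for \<xi> a
    define gg where "gg \<xi> v = snd (FG \<xi> (rte v)) v" for \<xi> v
    have capff: "0 \<le> ff \<xi> (u,v) \<and> ff \<xi> (u,v) \<le> C / 2 * x {u,v}"
      if xi: "\<xi> \<in> {1..N}" and uv: "(u,v) \<in> arcs dep Vp" for \<xi> u v
    proof -
      have cap1: "0 \<le> Fl x C dep (rte c) (fst (FG \<xi> (rte c))) (u,v) \<and>
                  Fl x C dep (rte c) (fst (FG \<xi> (rte c))) (u,v) \<le> C / 2 * x {u,v}" if c: "c \<in> Vp" for c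
      proof -
        have v: "valid \<xi> (rte c) (fst (FG \<xi> (rte c))) (snd (FG \<xi> (rte c)))" using FGv[OF xi c] .
        show ?thesis using Fl_cap[OF C _ _ _ uv] r1 c v unfolding valid_def by blast
      qed
      have m: "u \<in> V" "v \<in> V" "u \<noteq> v" using uv arc_mem by auto
      show ?thesis
      proof (cases "u \<in> Vp")
        case True thus ?thesis using cap1[of u] unfolding ff_def by simp
      next
        case False
        hence "v \<in> Vp" using m by auto
        thus ?thesis using cap1[of v] False unfolding ff_def by simp
      qed
    qed
    have ffc: "ff \<xi> (c,u) = Fl x C dep (rte c) (fst (FG \<xi> (rte c))) (c,u) \<and>
               ff \<xi> (u,c) = Fl x C dep (rte c) (fst (FG \<xi> (rte c))) (u,c)"
      if c: "c \<in> Vp" and u: "u \<in> V - {c}" for \<xi> c u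
    proof -
      have e1: "ff \<xi> (c,u) = Fl x C dep (rte c) (fst (FG \<xi> (rte c))) (c,u)" using c unfolding ff_def by simp
      have e2: "ff \<xi> (u,c) = Fl x C dep (rte c) (fst (FG \<xi> (rte c))) (u,c)"
      proof (cases "u \<in> Vp")
        case False thus ?thesis using c unfolding ff_def by simp
      next
        case True
        show ?thesis
        proof (cases "x {u,c} = 0")
          case True thus ?thesis unfolding ff_def Fl_def by simp
        next
          case False
          hence "x {c,u} \<noteq> 0" using xsym[of u c] by simp
          hence "u \<in> set (rte c)" using nbr[of "rte c" c u] r1 c u True by blast
          hence "rte u = rte c" using r2 c by blast
          thus ?thesis using True unfolding ff_def by simp
        qed
      qed
      show ?thesis using e1 e2 by blast
    qed
    have "y \<in> FLOW dep Vp C N d b x"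
      unfolding FLOW_def
    proof (intro CollectI conjI exI[of _ ff] exI[of _ gg] ballI)
      show "y \<in> box Vp N b" using yb .
    next
      fix \<xi> a assume xi: "\<xi> \<in> {1..N}" and a: "a \<in> arcs dep Vp"
      obtain u v where "a = (u,v)" by (cases a)
      thus "0 \<le> ff \<xi> a" using capff[OF xi] a by blast
    next
      fix \<xi> v assume xi: "\<xi> \<in> {1..N}" and v: "v \<in> Vp"
      show "0 \<le> gg \<xi> v" using FGv[OF xi v] v unfolding valid_def gg_def by blast
    next
      fix \<xi> a assume xi: "\<xi> \<in> {1..N}" and a: "a \<in> arcs dep Vp"
      obtain u v where uv: "a = (u,v)" by (cases a)
      show "case a of (u, v) \<Rightarrow> ff \<xi> (u, v) \<le> C / 2 * x {u, v}" using capff[OF xi] a uv by simp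
    next
      fix \<xi> v assume xi: "\<xi> \<in> {1..N}" and v: "v \<in> Vp"
      obtain k where k: "1 \<le> k" "k \<le> length (rte v)" "wl dep (rte v) ! k = v"
        using pos_of r1 v by blast
      have "\<forall>i\<in>{1..length (rte v)}. snd (FG \<xi> (rte v)) (wl dep (rte v) ! i) \<le> C * y \<xi> (wl dep (rte v) ! i)"
        using FGv[OF xi v] unfolding valid_def by blast
      moreover have kin: "k \<in> {1..length (rte v)}" using k by simp
      ultimately have "snd (FG \<xi> (rte v)) (wl dep (rte v) ! k) \<le> C * y \<xi> (wl dep (rte v) ! k)" by blast
      thus "gg \<xi> v \<le> C * y \<xi> v" using k(3) unfolding gg_def by simp
    next
      fix \<xi> c assume xi: "\<xi> \<in> {1..N}" and c: "c \<in> Vp"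
      let ?R = "rte c" and ?fr = "fst (FG \<xi> (rte c))" and ?gr = "snd (FG \<xi> (rte c))"
      have ir: "in_routes dep Vp x ?R" using r1 c by blast
      obtain k where k: "1 \<le> k" "k \<le> length ?R" "wl dep ?R ! k = c"
        using pos_of r1 c by blast
      have cons: "\<forall>i\<in>{1..length ?R}. ?fr (wl dep ?R ! (i - 1), wl dep ?R ! i) + d \<xi> (wl dep ?R ! i) = ?fr (wl dep ?R ! i, wl dep ?R ! (i + 1)) + ?gr (wl dep ?R ! i)"
        using FGv[OF xi c] unfolding valid_def by blast
      have FC: "(\<Sum>u\<in>V - {c}. Fl x C dep ?R ?fr (u, c)) + d \<xi> c =
                (\<Sum>u\<in>V - {c}. Fl x C dep ?R ?fr (c, u)) + ?gr c"
        using Fl_cons[OF ir cons k(1,2)] k(3) by simp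
      have s1: "(\<Sum>u\<in>V - {c}. ff \<xi> (u, c)) = (\<Sum>u\<in>V - {c}. Fl x C dep ?R ?fr (u, c))"
        using ffc[OF c] by (intro sum.cong) auto
      have s2: "(\<Sum>u\<in>V - {c}. ff \<xi> (c, u)) = (\<Sum>u\<in>V - {c}. Fl x C dep ?R ?fr (c, u))"
        using ffc[OF c] by (intro sum.cong) auto
      have cV: "c \<in> V" using c by simp
      show "(\<Sum>a\<in>{a\<in>arcs dep Vp. snd a = c}. ff \<xi> a) + d \<xi> c =
            (\<Sum>a\<in>{a\<in>arcs dep Vp. fst a = c}. ff \<xi> a) + gg \<xi> c"
        unfolding arcs_in[OF cV] arcs_out[OF cV] s1 s2 gg_def using FC .
    qed
    thus "y \<in> FLOW dep Vp C N d b x \<inter> intpts Vp N" using yi by blast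
  qed
qed


end
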